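(* Let $t>0$ and let $P,Q$ be $t$-convex polygons in the Lorentz plane with parallel edges, i.e. with the same inward unit normals $\eta_1,\dots,\eta_n$ of their fundamental edges, and with support vectors $h(P)=(h_1(P),\dots,h_n(P))$, $h(Q)=(h_1(Q),\dots,h_n(Q))$. Then $$\operatorname{coarea}(P,Q)^2\leq \operatorname{coarea}(P)\operatorname{coarea}(Q),$$ with equality if and only if $P$ and $Q$ are homothetic, i.e. there is $\lambda>0$ with $h_i(P)=\lambda h_i(Q)$ for all $i$.
   Context: Lorentz plane: $\mathbb{R}^2$ with $\langle x,y\rangle_1=x_1y_1-x_2y_2$; $\mathbb{H}=\{x:\langle x,x\rangle_1=-1,x_2>0\}$; $H_s=\begin{pmatrix}\cosh s&\sinh s\\ \sinh s&\cosh s\end{pmatrix}$. A $t$-convex polygon is the intersection, over $k\in\mathbb{Z}$ and $i=1,\dots,n$, of the half-planes $\{x:\langle x,H_t^k\eta_i\rangle_1\le -h_i\}$, for pairwise distinct $\eta_i\in\mathbb{H}$ and $h_i>0$, taken minimal so each $\eta_i$ is the inward normal of a genuine edge. Its fundamental edges are labeled so that $\eta_1$ is the normal of a chosen edge, $\eta_2$ the normal of the edge to its right, etc., up to $\eta_{n+1}=H_t\eta_1$; $h_i(P)$ is the support number of the edge with normal $\eta_i$; $\varphi_i>0$ is defined by $\cosh\varphi_i=-\langle\eta_i,\eta_{i+1}\rangle_1$, so $\varphi_1+\dots+\varphi_n=t$. With indices cyclic mod $n$, the mixed coarea of $h,k\in\mathbb{R}^n$ is $\operatorname{coarea}(h,k)=\frac12\sum_{i=1}^n\big(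 h_i\frac{k_i\cosh\varphi_{i-1}-k_{i-1}}{\sinh\varphi_{i-1}}+h_i\frac{k_i\cosh\varphi_i-k_{i+1}}{\sinh\varphi_i}\big)$; $\operatorname{coarea}(P,Q):=\operatorname{coarea}(h(P),h(Q))$ and $\operatorname{coarea}(P):=\operatorname{coarea}(P,P)$ (which equals half the sum over fundamental edges of support number times Lorentzian edge length). *)

theory Defs
  imports Complex_Main
begin

definition lor :: "real \<times> real \<Rightarrow> real \<times> real \<Rightarrow> real" where
  "lor x y = fst x * fst y - snd x * snd y"

definition hyperboloid :: "(real \<times> real) set" where
  "hyperboloid = {x. lor x x = -1 \<and> snd x > 0}"

definition Hmap :: "real \<Rightarrow> real \<times> real \<Rightarrow> real \<times> real" where
  "Hmap s x = (cosh s * fst x + sinh s * snd x, sinh s * fst x + cosh s * snd x)"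

definition Hpow :: "real \<Rightarrow> int \<Rightarrow> real \<times> real \<Rightarrow> real \<times> real" where
  "Hpow t k = Hmap (of_int k * t)"

definition tpoly_set :: "real \<Rightarrow> nat \<Rightarrow> (nat \<Rightarrow> real \<times> real) \<Rightarrow> (nat \<Rightarrow> real) \<Rightarrow> (real \<times> real) set" where
  "tpoly_set t n eta h = {x. \<forall>k::int. \<forall>i<n. lor x (Hpow t k (eta i)) \<le> - h i}"

definition eta_ext :: "real \<Rightarrow> nat \<Rightarrow> (nat \<Rightarrow> real \<times> real) \<Rightarrow> nat \<Rightarrow> real \<times> real" where
  "eta_ext t n eta i = (if i < n then eta i else Hmap t (eta 0))"

text \<open>(t, n, eta, h) describes a t-convex polygon whose fundamental edges, labeled
  consecutively from left to right, have inward normals eta_0, ..., eta_{n-1}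
  (and eta_n = H_t eta_0) and support numbers h_0, ..., h_{n-1}.\<close>
definition t_convex_polygon :: "real \<Rightarrow> nat \<Rightarrow> (nat \<Rightarrow> real \<times> real) \<Rightarrow> (nat \<Rightarrow> real) \<Rightarrow> bool" where
  "t_convex_polygon t n eta h \<longleftrightarrow>
     n \<ge> 1 \<and>
     (\<forall>i<n. eta i \<in> hyperboloid \<and> h i > 0) \<and>
     inj_on eta {..<n} \<and>
     \<comment> \<open>each eta_i is the normal of a genuine edge (positive length)\<close>
     (\<forall>i<n. \<exists>x y. x \<in> tpoly_set t n eta h \<and> y \<in> tpoly_set t n eta h \<and> x \<noteq> y \<and>
                   lor x (eta i) = - h i \<and> lor y (eta i) = - h i) \<and>
     \<comment> \<open>labelling: eta_{i+1} is the normal of the next edge to the right\<close>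
     (\<forall>i<n. fst (eta_ext t n eta i) < fst (eta_ext t n eta (Suc i)))"

definition phi :: "real \<Rightarrow> nat \<Rightarrow> (nat \<Rightarrow> real \<times> real) \<Rightarrow> nat \<Rightarrow> real" where
  "phi t n eta i = arcosh (- lor (eta_ext t n eta i) (eta_ext t n eta (Suc i)))"

definition coarea :: "real \<Rightarrow> nat \<Rightarrow> (nat \<Rightarrow> real \<times> real) \<Rightarrow> (nat \<Rightarrow> real) \<Rightarrow> (nat \<Rightarrow> real) \<Rightarrow> real" where
  "coarea t n eta h k = (1/2) * (\<Sum>i<n.
      let p = (i + n - 1) mod n; q = Suc i mod n;
          fp = phi t n eta p; fi = phi t n eta i in
      h i * (k i * cosh fp - k p) / sinh fp + h i * (k i * cosh fi - k q) / sinh fi)"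

end

theory Submission
  imports Defs
begin

definition FF :: "nat \<Rightarrow> (nat \<Rightarrow> nat) \<Rightarrow> (nat \<Rightarrow> real) \<Rightarrow> (nat \<Rightarrow> real) \<Rightarrow> (nat \<Rightarrow> real) \<Rightarrow> (nat \<Rightarrow> real) \<Rightarrow> real" where
  "FF n g c s h k = (\<Sum>j<n. (c j * (h j * k j + h (g j) * k (g j)) - h j * k (g j) - h (g j) * k j) / s j)"

lemma FF_sym: "FF n g c s h k = FF n g c s k h"
  unfolding FF_def by (intro sum.cong) (auto simp: algebra_simps)

lemma FF_quad: "FF n g c s (\<lambda>i. h i - l * k i) (\<lambda>i. h i - l * k i)
   = FF n g c s h h - 2 * l * FF n g c s h k + l^2 * FF n g c s k k"
proof -
  have "FF n g c s (\<lambda>i. h i - l * k i) (\<lambda>i. h i - l * k i)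
     = (\<Sum>j<n. ((c j * (h j * h j + h (g j) * h (g j)) - h j * h (g j) - h (g j) * h j)
        - 2 * l * (c j * (h j * k j + h (g j) * k (g j)) - h j * k (g j) - h (g j) * k j)
        + l^2 * (c j * (k j * k j + k (g j) * k (g j)) - k j * k (g j) - k (g j) * k j)) / s j)"
    unfolding FF_def
    apply (intro sum.cong refl)
    apply (rule arg_cong[where f="\<lambda>x. x / _"])
    by (simp add: algebra_simps power2_eq_square)
  also have "\<dots> = (\<Sum>j<n. (c j * (h j * h j + h (g j) * h (g j)) - h j * h (g j) - h (g j) * h j) / s j
        - 2 * l * ((c j * (h j * k j + h (g j) * k (g j)) - h j * k (g j) - h (g j) * k j) / s j)
        + l^2 * ((c j * (k j * k j + k (g j) * k (g j)) - k j * k (g j) - k (g j) * k j) / s j))"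
    by (intro sum.cong refl) (simp add: algebra_simps diff_divide_distrib add_divide_distrib)
  also have "\<dots> = FF n g c s h h - 2 * l * FF n g c s h k + l^2 * FF n g c s k k"
    unfolding FF_def by (simp add: sum.distrib sum_subtractf sum_distrib_left)
  finally show ?thesis .
qed

lemma FF_lower:
  assumes "\<And>j. j < n \<Longrightarrow> c j > 1" "\<And>j. j < n \<Longrightarrow> s j > 0"
  shows "FF n g c s h h \<ge> (\<Sum>j<n. (c j - 1) * (h j)^2 / s j)"
  unfolding FF_def
proof (rule sum_mono)
  fix j assume "j \<in> {..<n}"
  hence c: "c j > 1" and s: "s j > 0" using assms by auto
  have "(c j - 1) * (h j)^2 \<le> c j * (h j * h j + h (g j) * h (g j)) - h j * h (g j) - h (g j) * h j"
  proof -
    have "0 \<le> (h j - h (g j))^2" by simp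
    moreover have "0 \<le> (c j - 1) * (h (g j))^2" using c by simp
    ultimately show ?thesis by (simp add: algebra_simps power2_eq_square)
  qed
  thus "(c j - 1) * (h j)^2 / s j \<le> (c j * (h j * h j + h (g j) * h (g j)) - h j * h (g j) - h (g j) * h j) / s j"
    using s by (simp add: divide_right_mono)
qed

lemma FF_pos:
  assumes "\<And>j. j < n \<Longrightarrow> c j > 1" "\<And>j. j < n \<Longrightarrow> s j > 0" "i < n" "h i \<noteq> 0"
  shows "FF n g c s h h > 0"
proof -
  have "0 < (\<Sum>j<n. (c j - 1) * (h j)^2 / s j)"
  proof (rule sum_pos2[of _ i])
    show "(c i - 1) * (h i)^2 / s i > 0" using assms by auto
    fix j assume "j \<in> {..<n}"
    thus "0 \<le> (c j - 1) * (h j)^2 / s j" using assms(1,2)[of j] by auto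
  qed (use assms in auto)
  thus ?thesis using FF_lower[where n=n and c=c and s=s and g=g and h=h] assms(1,2) by fastforce
qed

lemma FF_zero:
  assumes "\<And>j. j < n \<Longrightarrow> c j > 1" "\<And>j. j < n \<Longrightarrow> s j > 0" "FF n g c s h h = 0" "i < n"
  shows "h i = 0"
  using FF_pos[where n=n and c=c and s=s and g=g and h=h and i=i] assms by fastforce

lemma FF_cong:
  assumes "\<And>j. j < n \<Longrightarrow> g j < n" "\<And>i. i < n \<Longrightarrow> h i = h' i"
  shows "FF n g c s h k = FF n g c s h' k"
  unfolding FF_def using assms by (intro sum.cong) auto

lemma FF_scale: "FF n g c s (\<lambda>i. a * h i) k = a * FF n g c s h k"
  unfolding FF_def by (simp add: sum_distrib_left algebra_simps add_divide_distrib diff_divide_distrib)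

lemma FF_CS:
  assumes c: "\<And>j. j < n \<Longrightarrow> c j > 1" and s: "\<And>j. j < n \<Longrightarrow> s j > 0"
    and g: "\<And>j. j < n \<Longrightarrow> g j < n"
    and i0: "0 < n" and hp: "\<And>i. i < n \<Longrightarrow> h i > 0" and kp: "\<And>i. i < n \<Longrightarrow> k i > 0"
  shows "(FF n g c s h k)^2 \<le> FF n g c s h h * FF n g c s k k
     \<and> ((FF n g c s h k)^2 = FF n g c s h h * FF n g c s k k \<longleftrightarrow> (\<exists>a>0. \<forall>i<n. h i = a * k i))"
proof -
  let ?A = "FF n g c s h h" and ?B = "FF n g c s h k" and ?C = "FF n g c s k k"
  have C: "?C > 0" using FF_pos[OF c s i0] kp[OF i0] by auto
  define l where "l = ?B / ?C"
  have q: "FF n g c s (\<lambda>i. h i - l * k i) (\<lambda>i. h i - l * k i) = ?A - ?B^2 / ?C"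
    unfolding FF_quad l_def using C by (simp add: field_simps power2_eq_square)
  have ge0: "0 \<le> (\<Sum>j<n. (c j - 1) * ((\<lambda>i. h i - l * k i) j)^2 / s j)"
  proof (rule sum_nonneg)
    fix j assume "j \<in> {..<n}"
    thus "0 \<le> (c j - 1) * ((\<lambda>i. h i - l * k i) j)^2 / s j" using c[of j] s[of j] by simp
  qed
  have ge: "FF n g c s (\<lambda>i. h i - l * k i) (\<lambda>i. h i - l * k i) \<ge> 0"
    using FF_lower[where n=n and c=c and s=s and g=g and h="\<lambda>i. h i - l * k i"] c s ge0
    by (meson order_trans)
  have ineq: "?B^2 \<le> ?A * ?C"
    using ge q C by (simp add: field_simps)
  moreover have "?B^2 = ?A * ?C \<longleftrightarrow> (\<exists>a>0. \<forall>i<n. h i = a * k i)"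
  proof
    assume eq: "?B^2 = ?A * ?C"
    hence "FF n g c s (\<lambda>i. h i - l * k i) (\<lambda>i. h i - l * k i) = 0"
      using q C by (simp add: field_simps)
    hence z: "\<forall>i<n. h i = l * k i" using FF_zero[OF c s] by fastforce
    have "l > 0" using z hp[OF i0] kp[OF i0]
      by (metis i0 zero_less_mult_pos2)
    thus "\<exists>a>0. \<forall>i<n. h i = a * k i" using z by blast
  next
    assume "\<exists>a>0. \<forall>i<n. h i = a * k i"
    then obtain a where a: "\<forall>i<n. h i = a * k i" by blast
    have B: "?B = a * ?C"
      using FF_cong[where n=n and g=g and h=h and h'="\<lambda>i. a * k i" and c=c and s=s and k=k] g a FF_scale[of n g c s a k k] by simp
    have "?A = a * ?B"
      using FF_cong[where n=n and g=g and h=h and h'="\<lambda>i. a * k i" and c=c and s=s and k=h] g a FF_scale[of n g c s a k h] FF_sym by metis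
    thus "?B^2 = ?A * ?C" using B by (simp add: power2_eq_square)
  qed
  ultimately show ?thesis by blast
qed


lemma mod_aux1: "j < n \<Longrightarrow> (Suc j mod n + n - 1) mod n = j"
proof (cases "Suc j = n")
  case True thus "j < n \<Longrightarrow> ?thesis" by simp
next
  case False
  assume "j < n" hence "Suc j < n" using False by simp
  thus ?thesis by simp
qed

lemma mod_aux2: "i < n \<Longrightarrow> Suc ((i + n - 1) mod n) mod n = i"
proof (cases i)
  case 0 assume "i < n" thus ?thesis using 0
    by (metis Suc_pred' add_0 lessI mod_less mod_self zero_less_iff_neq_zero)
next
  case (Suc m) assume "i < n"
  hence "(i + n - 1) mod n = m" using Suc by (simp add: add.commute)
  thus ?thesis using Suc \<open>i < n\<close> by simp
qed

lemma bij_succ: "0 < n \<Longrightarrow> bij_betw (\<lambda>j. Suc j mod n) {..<n} {..<n}"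
  by (rule bij_betw_byWitness[where f'="\<lambda>i. (i + n - 1) mod n"])
     (use mod_aux1[of _ n] mod_aux2[of _ n] in auto)

lemma hyp_lor_gt:
  assumes "lor x x = -1" "lor y y = -1" "snd x > 0" "snd y > 0" "fst x \<noteq> fst y"
  shows "- lor x y > 1"
proof -
  obtain a b where x: "x = (a,b)" by (cases x)
  obtain e d where y: "y = (e,d)" by (cases y)
  have b2: "b^2 = 1 + a^2" and d2: "d^2 = 1 + e^2" and bp: "b > 0" and dp: "d > 0" and ae: "a \<noteq> e"
    using assms unfolding x y lor_def by (auto simp: power2_eq_square)
  have "(a - e)^2 > 0" using ae by simp
  have p1: "(b*d)^2 = (1+a^2)*(1+e^2)" using b2 d2 by (simp add: power_mult_distrib)
  have p2: "(1+a^2)*(1+e^2) - (1+a*e)^2 = (a-e)^2" by (simp add: algebra_simps power2_eq_square)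
  have "(b*d)^2 > (1 + a*e)^2" using p1 p2 \<open>(a - e)^2 > 0\<close> by linarith
  moreover have "b*d > 0" using bp dp by simp
  ultimately have "b*d > 1 + a*e"
  proof (cases "1 + a*e \<le> 0")
    case False
    thus "(b*d)^2 > (1 + a*e)^2 \<Longrightarrow> 0 < b*d \<Longrightarrow> b*d > 1 + a*e"
      using power_less_imp_less_base[of "1+a*e" 2 "b*d"] by linarith
  qed linarith
  thus ?thesis unfolding x y lor_def by simp
qed

lemma Hmap_hyp: assumes "x \<in> hyperboloid" shows "Hmap t x \<in> hyperboloid"
proof -
  obtain a b where x: "x = (a,b)" by (cases x)
  have ab: "a*a - b*b = -1" "b > 0" using assms unfolding x hyperboloid_def lor_def by auto
  have hp: "cosh t ^ 2 - sinh t ^ 2 = 1" by (rule hyperbolic_pythagoras)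
  have l: "lor (Hmap t x) (Hmap t x) = (cosh t ^ 2 - sinh t ^ 2) * (a*a - b*b)"
    unfolding x Hmap_def lor_def by (simp add: algebra_simps power2_eq_square)
  have "\<bar>a\<bar>^2 < b^2" using ab by (simp add: power2_eq_square)
  hence "\<bar>a\<bar> < b" by (rule power_less_imp_less_base) (use ab in simp)
  moreover have "\<bar>sinh t\<bar>^2 < (cosh t)^2" using hp by simp
  hence "\<bar>sinh t\<bar> < cosh t" by (rule power_less_imp_less_base) (use cosh_real_pos[of t] in simp)
  ultimately have "\<bar>sinh t * a\<bar> < cosh t * b"
    by (simp add: abs_mult mult_strict_mono')
  hence "sinh t * a + cosh t * b > 0" by linarith
  thus ?thesis using l hp ab unfolding hyperboloid_def Hmap_def x by simp
qed

lemma eta_ext_hyp: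
  assumes "t_convex_polygon t n eta h" "i \<le> n"
  shows "eta_ext t n eta i \<in> hyperboloid"
proof -
  have n: "n \<ge> 1" and H: "\<forall>i<n. eta i \<in> hyperboloid" using assms(1) unfolding t_convex_polygon_def by auto
  show ?thesis unfolding eta_ext_def using H n assms(2) Hmap_hyp[of "eta 0" t] by auto
qed

lemma phi_props:
  assumes "t_convex_polygon t n eta h" "i < n"
  shows "cosh (phi t n eta i) > 1" "sinh (phi t n eta i) > 0"
proof -
  have f: "fst (eta_ext t n eta i) < fst (eta_ext t n eta (Suc i))"
    using assms unfolding t_convex_polygon_def by auto
  have h1: "eta_ext t n eta i \<in> hyperboloid" and h2: "eta_ext t n eta (Suc i) \<in> hyperboloid"
    using eta_ext_hyp[OF assms(1)] assms(2) by auto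
  have v: "- lor (eta_ext t n eta i) (eta_ext t n eta (Suc i)) > 1"
    using hyp_lor_gt h1 h2 f unfolding hyperboloid_def by auto
  show c: "cosh (phi t n eta i) > 1" unfolding phi_def using v cosh_arcosh_real by simp
  have "phi t n eta i > 0" unfolding phi_def using v arcosh_real_gt_1_iff by simp
  thus "sinh (phi t n eta i) > 0" by simp
qed

lemma coarea_FF:
  assumes "0 < n"
  shows "coarea t n eta h k = (1/2) * FF n (\<lambda>j. Suc j mod n) (\<lambda>j. cosh (phi t n eta j)) (\<lambda>j. sinh (phi t n eta j)) h k"
proof -
  let ?c = "\<lambda>j. cosh (phi t n eta j)" and ?s = "\<lambda>j. sinh (phi t n eta j)"
  let ?p = "\<lambda>i. (i + n - 1) mod n" and ?g = "\<lambda>j. Suc j mod n"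
  define A where "A i = h i * (k i * ?c (?p i) - k (?p i)) / ?s (?p i)" for i
  define B where "B i = h i * (k i * ?c i - k (?g i)) / ?s i" for i
  have "coarea t n eta h k = (1/2) * (\<Sum>i<n. A i + B i)"
    unfolding coarea_def A_def B_def Let_def by simp
  also have "(\<Sum>i<n. A i + B i) = (\<Sum>i<n. A i) + (\<Sum>i<n. B i)" by (simp add: sum.distrib)
  also have "(\<Sum>i<n. A i) = (\<Sum>j<n. A (?g j))"
    using sum.reindex_bij_betw[OF bij_succ[OF assms], of A] by simp
  also have "(\<Sum>j<n. A (?g j)) + (\<Sum>i<n. B i) = (\<Sum>j<n. A (?g j) + B j)" by (simp add: sum.distrib)
  also have "\<dots> = FF n ?g ?c ?s h k"
    unfolding FF_def
  proof (intro sum.cong refl)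
    fix j assume "j \<in> {..<n}"
    hence pj: "?p (?g j) = j" using mod_aux1 by auto
    show "A (?g j) + B j = (?c j * (h j * k j + h (?g j) * k (?g j)) - h j * k (?g j) - h (?g j) * k j) / ?s j"
    proof -
      have "A (?g j) + B j = (h (?g j) * (k (?g j) * ?c j - k j) + h j * (k j * ?c j - k (?g j))) / ?s j"
        unfolding A_def B_def pj by (simp add: add_divide_distrib)
      also have "h (?g j) * (k (?g j) * ?c j - k j) + h j * (k j * ?c j - k (?g j))
          = ?c j * (h j * k j + h (?g j) * k (?g j)) - h j * k (?g j) - h (?g j) * k j"
        by (simp add: algebra_simps)
      finally show ?thesis .
    qed
  qed
  finally show ?thesis .
qed

theorem corollary5p3:
  fixes t :: real and n :: nat and eta :: "nat \<Rightarrow> real \<times> real" and hP hQ :: "nat \<Rightarrow> real"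
  assumes "t > 0"
    and "t_convex_polygon t n eta hP"
    and "t_convex_polygon t n eta hQ"
  shows "(coarea t n eta hP hQ)^2 \<le> coarea t n eta hP hP * coarea t n eta hQ hQ
         \<and> ((coarea t n eta hP hQ)^2 = coarea t n eta hP hP * coarea t n eta hQ hQ
             \<longleftrightarrow> (\<exists>c>0. \<forall>i<n. hP i = c * hQ i))"
proof -
  have n: "0 < n" using assms(2) unfolding t_convex_polygon_def by auto
  have hp: "\<And>i. i < n \<Longrightarrow> hP i > 0" using assms(2) unfolding t_convex_polygon_def by auto
  have hq: "\<And>i. i < n \<Longrightarrow> hQ i > 0" using assms(3) unfolding t_convex_polygon_def by auto
  let ?F = "FF n (\<lambda>j. Suc j mod n) (\<lambda>j. cosh (phi t n eta j)) (\<lambda>j. sinh (phi t n eta j))"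
  have CS: "(?F hP hQ)^2 \<le> ?F hP hP * ?F hQ hQ
     \<and> ((?F hP hQ)^2 = ?F hP hP * ?F hQ hQ \<longleftrightarrow> (\<exists>a>0. \<forall>i<n. hP i = a * hQ i))"
    by (rule FF_CS) (use phi_props[OF assms(2)] n hp hq in auto)
  have e1: "(coarea t n eta hP hQ)^2 = (?F hP hQ)^2 / 4" unfolding coarea_FF[OF n] by (simp add: power2_eq_square)
  have e2: "coarea t n eta hP hP * coarea t n eta hQ hQ = ?F hP hP * ?F hQ hQ / 4"
    unfolding coarea_FF[OF n] by simp
  show ?thesis unfolding e1 e2 using CS by auto
qed

end
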